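(* Let $0\le s\le r\le T$, $x_*,y_*\in\mathbb T^d$, $m(\cdot),\nu(\cdot)\in\mathcal M^{C_0}$, $u_*=\hat u(s,x_*,y_*,m(s))$, $v^*=\hat v(s,x_*,y_*,m(s))$, $\xi\in\mathcal U$, $\zeta\in\mathcal V$, and let $x(\cdot)=x(\cdot,s,x_*,m(\cdot),\delta_{u_*}\zeta)$, $y(\cdot)=x(\cdot,s,y_*,\nu(\cdot),\xi\delta_{v^*})$. Then $$\|x(r)-y(r)\|^2\le\|x_*-y_*\|^2(1+3L(r-s))+LW_2^2(m(s),\nu(s))(r-s)+\varpi_2(r-s)\,(r-s).$$
   Context: Standing setup. Let $T>0$, $\mathbb T^d=\mathbb R^d/\mathbb Z^d$ with metric $\|x-y\|=\min\{\|x'-y'\|:x'\in x,\ y'\in y\}$. $\mathcal P^2(\mathbb T^d)$ is the set of Borel probability measures on $\mathbb T^d$ with the 2-Wasserstein metric $W_2$ (a compact metric space). $U,V$ are compact metric spaces. $f:[0,T]\times\mathbb T^d\times\mathcal P^2(\mathbb T^d)\times U\times V\to\mathbb R^d$ is continuous and satisfies $\|f(t,x,m,u,v)-f(t,x',m',u,v)\|\le L\|x-x'\|+LW_2(m,m')$ for all arguments; the Isaacs condition holds: $\min_{u\in U}\max_{v\in V}\langle w,f(t,x,m,u,v)\rangle=\max_{v\in V}\min_{u\in U}\langle w,f(t,x,m,u,v)\rangle$ for all $t,x,m$ and $w\in\mathbb R^d$. Relaxed controls: with $\lambda$ Lebesgue measure on $[0,T]$, $\mathcal U$, $\mathcal V$,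 $\mathcal W$ denote the measurable (in the weak sense) maps from $[0,T]$ to $\mathcal P(U)$, $\mathcal P(V)$, $\mathcal P(U\times V)$ modulo $\lambda$-a.e. equality. For $\xi\in\mathcal U$, $\zeta\in\mathcal V$, $\xi\zeta\in\mathcal W$ is $t\mapsto\xi(t)\otimes\zeta(t)$; for $u\in U$, $\delta_u$ denotes the constant control $t\mapsto\delta_u$ (similarly $\delta_v$). $\mathcal M=C([0,T],\mathcal P^2(\mathbb T^d))$ and $\mathcal M^R$ is the set of $m(\cdot)\in\mathcal M$ with $W_2(m(t'),m(t''))\le R|t'-t''|$. For $s\in[0,T]$, $y\in\mathbb T^d$, $m(\cdot)\in\mathcal M$, $\eta\in\mathcal W$, $x(\cdot,s,y,m(\cdot),\eta)$ is the solution on $[0,T]$ of $\frac{d}{dt}x(t)=\int_{U\times V}f(t,x(t),m(t),u,v)\eta(t,d(u,v))$, $x(s)=y$. Constants: $C_0$ is a constant with $\|f(t,x,m,u,v)\|\le C_0$ for all arguments. $\varpi_f:\mathbb R\to[0,\infty)$ is even, nondecreasing on $[0,\infty)$, vanishing and continuous at $0$, with $\|f(t,x,m,u,v)-f(t',x,m,u,v)\|\le\varpi_f(t-t')$. Set $\varpi_1(\varepsilon)=2\sqrt d\,\varpi_f(\varepsilon)+4\sqrt d\,LC_0\varepsilon$ and $\varpi_2(\varepsilon)=2\varpi_1(\varepsilon)+4C_0^2\varepsilon$. Extremal controls: for $s\in[0,T]$, $x,y\in\mathbb T^d$, $m\in\mathcal P^2(\mathbb T^d)$, fix representatives $x'\in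 x$, $y'\in y$ in $\mathbb R^d$ with $\|x'-y'\|=\|x-y\|$, and let $\hat u(s,x,y,m)\in\operatorname{argmin}_{u\in U}\max_{v\in V}\langle x'-y',f(s,x,m,u,v)\rangle$ and $\hat v(s,x,y,m)\in\operatorname{argmax}_{v\in V}\min_{u\in U}\langle x'-y',f(s,x,m,u,v)\rangle$ (chosen measurably in their arguments). *)

theory Defs
  imports "HOL-Probability.Probability"
begin

text \<open>Points of the torus T^d are represented by (any) representative in real^'d;
  d = CARD('d).\<close>

definition int_vec :: "int ^ 'd \<Rightarrow> real ^ 'd" where
  "int_vec k = (\<chi> i. of_int (k $ i))"

definition tdist :: "real ^ 'd::finite \<Rightarrow> real ^ 'd \<Rightarrow> real" where
  "tdist x y = (INF k \<in> (UNIV :: (int ^ 'd) set). norm (x - y + int_vec k))"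

text \<open>Borel probability measures on T^d, represented as Borel probability measures
  on real^'d concentrated on the fundamental domain [0,1)^d.\<close>
definition unit_cell :: "(real ^ 'd::finite) set" where
  "unit_cell = {x. \<forall>i. 0 \<le> x $ i \<and> x $ i < 1}"

definition P2 :: "(real ^ 'd::finite) measure set" where
  "P2 = {m. prob_space m \<and> sets m = sets borel \<and> emeasure m unit_cell = 1}"

definition couplings :: "(real ^ 'd::finite) measure \<Rightarrow> (real ^ 'd) measure
    \<Rightarrow> ((real ^ 'd) \<times> (real ^ 'd)) measure set" where
  "couplings m m' = {\<pi>. prob_space \<pi> \<and> sets \<pi> = sets (borel \<Otimes>\<^sub>M borel)
      \<and> distr \<pi> borel fst = m \<and> distr \<pi> borel snd = m'}"

definition W2 :: "(real ^ 'd::finite) measure \<Rightarrow> (real ^ 'd) measure \<Rightarrow> real" where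
  "W2 m m' = sqrt (INF \<pi> \<in> couplings m m'. integral\<^sup>L \<pi> (\<lambda>p. (tdist (fst p) (snd p))\<^sup>2))"

definition flows_R :: "real \<Rightarrow> real \<Rightarrow> (real \<Rightarrow> (real ^ 'd::finite) measure) set" where
  "flows_R T R = {m. (\<forall>t\<in>{0..T}. m t \<in> P2) \<and>
      (\<forall>t'\<in>{0..T}. \<forall>t''\<in>{0..T}. W2 (m t') (m t'') \<le> R * \<bar>t' - t''\<bar>)}"

text \<open>Relaxed controls on [0,T] with values in P(A): weakly measurable maps into the
  Borel probability measures on A (A a compact metric space, here a type).\<close>
definition relaxed_ctrl :: "real \<Rightarrow> (real \<Rightarrow> 'a::metric_space measure) \<Rightarrow> bool" where
  "relaxed_ctrl T \<xi> \<longleftrightarrow> (\<forall>t\<in>{0..T}. prob_space (\<xi> t) \<and> sets (\<xi> t) = sets borel) \<and>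
     (\<forall>g :: 'a \<Rightarrow> real. continuous_on UNIV g \<longrightarrow>
        (\<lambda>t. integral\<^sup>L (\<xi> t) g) \<in> borel_measurable (restrict_space borel {0..T}))"

definition prod_ctrl :: "(real \<Rightarrow> 'a measure) \<Rightarrow> (real \<Rightarrow> 'b measure) \<Rightarrow> real \<Rightarrow> ('a \<times> 'b) measure" where
  "prod_ctrl \<xi> \<zeta> = (\<lambda>t. \<xi> t \<Otimes>\<^sub>M \<zeta> t)"

definition dirac_ctrl :: "'a::topological_space \<Rightarrow> real \<Rightarrow> 'a measure" where
  "dirac_ctrl u = (\<lambda>t. return borel u)"

text \<open>x(.) = x(., s, y, m(.), eta): the (lifted to real^'d) Caratheodory solution on [0,T] of
  x'(t) = \<integral> f(t,x(t),m(t),u,v) eta(t, d(u,v)),  x(s) = y.\<close>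
definition is_traj ::
  "real \<Rightarrow> (real \<Rightarrow> real ^ 'd::finite \<Rightarrow> (real ^ 'd) measure \<Rightarrow> 'u \<Rightarrow> 'v \<Rightarrow> real ^ 'd)
   \<Rightarrow> real \<Rightarrow> real ^ 'd \<Rightarrow> (real \<Rightarrow> (real ^ 'd) measure) \<Rightarrow> (real \<Rightarrow> ('u \<times> 'v) measure)
   \<Rightarrow> (real \<Rightarrow> real ^ 'd) \<Rightarrow> bool" where
  "is_traj T f s y m \<eta> x \<longleftrightarrow>
     continuous_on {0..T} x \<and>
     set_integrable lborel {0..T}
        (\<lambda>\<tau>. integral\<^sup>L (\<eta> \<tau>) (\<lambda>p. f \<tau> (x \<tau>) (m \<tau>) (fst p) (snd p))) \<and>
     (\<forall>t\<in>{0..T}. x t = y + (LBINT \<tau>=s..t.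
        integral\<^sup>L (\<eta> \<tau>) (\<lambda>p. f \<tau> (x \<tau>) (m \<tau>) (fst p) (snd p))))"

definition varpi1 :: "nat \<Rightarrow> real \<Rightarrow> real \<Rightarrow> (real \<Rightarrow> real) \<Rightarrow> real \<Rightarrow> real" where
  "varpi1 d L C0 wmod \<epsilon> = 2 * sqrt (real d) * wmod \<epsilon> + 4 * sqrt (real d) * L * C0 * \<epsilon>"

definition varpi2 :: "nat \<Rightarrow> real \<Rightarrow> real \<Rightarrow> (real \<Rightarrow> real) \<Rightarrow> real \<Rightarrow> real" where
  "varpi2 d L C0 wmod \<epsilon> = 2 * varpi1 d L C0 wmod \<epsilon> + 4 * C0\<^sup>2 * \<epsilon>"

end

theory Submission imports Defs begin

lemma compact_dense_countable:
  assumes "compact (UNIV :: 'a::metric_space set)"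
  shows "\<exists>D::'a set. countable D \<and> (\<forall>x e. e > 0 \<longrightarrow> (\<exists>d\<in>D. dist x d < e))"
proof -
  note * = conjunct2[OF assms[unfolded compact_eq_totally_bounded]]
  have "\<exists>k. \<forall>e. e > 0 \<longrightarrow> finite (k e) \<and> (UNIV::'a set) \<subseteq> (\<Union>x\<in>k e. ball x e)"
  proof (rule choice, rule allI)
    fix e :: real
    show "\<exists>k. e > 0 \<longrightarrow> finite k \<and> (UNIV::'a set) \<subseteq> (\<Union>x\<in>k. ball x e)"
    proof (cases "e > 0")
      case True
      from *[rule_format, OF True] obtain k where "finite k \<and> (UNIV::'a set) \<subseteq> (\<Union>x\<in>k. ball x e)"
        by (elim exE) iprover
      then show ?thesis by (intro exI[of _ k] impI)
    next
      case False
      then show ?thesis by (intro exI impI) simp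
    qed
  qed
  then obtain k where k0: "\<forall>e. e > 0 \<longrightarrow> finite (k e) \<and> (UNIV::'a set) \<subseteq> (\<Union>x\<in>k e. ball x e)"
    by (elim exE) iprover
  have k: "finite (k e) \<and> (UNIV::'a set) \<subseteq> (\<Union>x\<in>k e. ball x e)" if "e > 0" for e
    using k0 that by simp
  define D where "D = (\<Union>n::nat. k (1 / Suc n))"
  have "countable D" unfolding D_def
  proof (rule countable_UN)
    fix n :: nat show "countable (k (1 / Suc n))" using k[of "1 / Suc n"] by (simp add: countable_finite)
  qed simp
  moreover have "\<exists>d\<in>D. dist x d < e" if e: "e > 0" for x and e :: real
  proof -
    obtain n :: nat where n: "1 / Suc n < e" using nat_approx_posE[OF e] by blast
    have "x \<in> (\<Union>y\<in>k (1 / Suc n). ball y (1 / Suc n))" 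
    proof -
      have "0 < 1 / real (Suc n)" by simp
      from k[OF this] show ?thesis by (meson UNIV_I subsetD)
    qed
    then obtain y where "y \<in> k (1 / Suc n)" "dist y x < 1 / Suc n" by auto
    then show ?thesis using n unfolding D_def by (auto simp: dist_commute intro!: bexI[of _ y])
  qed
  ultimately show ?thesis by blast
qed

lemma open_in_pair_borel:
  assumes "compact (UNIV :: 'a::metric_space set)" "compact (UNIV :: 'b::metric_space set)"
    and "open (G :: ('a \<times> 'b) set)"
  shows "G \<in> sets (borel \<Otimes>\<^sub>M borel)"
proof -
  obtain Da :: "'a set" where Da: "countable Da" "\<And>x e. e > 0 \<Longrightarrow> \<exists>d\<in>Da. dist x d < e"
    using compact_dense_countable[OF assms(1)] by blast
  obtain Db :: "'b set" where Db: "countable Db" "\<And>x e. e > 0 \<Longrightarrow> \<exists>d\<in>Db. dist x d < e"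
    using compact_dense_countable[OF assms(2)] by blast
  define R where "R = (\<lambda>(a, b, q). if ball a q \<times> ball b q \<subseteq> G then ball a q \<times> ball b q else ({} :: ('a \<times> 'b) set))"
  have "G = \<Union> (R ` (Da \<times> Db \<times> \<rat>))"
  proof
    show "\<Union> (R ` (Da \<times> Db \<times> \<rat>)) \<subseteq> G" unfolding R_def by (auto split: if_splits simp: subset_iff)
    show "G \<subseteq> \<Union> (R ` (Da \<times> Db \<times> \<rat>))"
    proof
      fix p assume "p \<in> G"
      obtain a b where p: "p = (a, b)" by force
      obtain e where e: "e > 0" "\<And>y. dist y p < e \<Longrightarrow> y \<in> G"
        using assms(3) \<open>p \<in> G\<close> unfolding open_dist by blast
      obtain q where q: "q \<in> \<rat>" "0 < q" "q < e / 4"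
        using e(1) by (metis Rats_dense_in_real divide_pos_pos zero_less_numeral)
      obtain da where da: "da \<in> Da" "dist a da < q" using Da(2) q(2) by blast
      obtain db where db: "db \<in> Db" "dist b db < q" using Db(2) q(2) by blast
      have sub: "ball da q \<times> ball db q \<subseteq> G"
      proof
        fix y assume "y \<in> ball da q \<times> ball db q"
        then obtain y1 y2 where y: "y = (y1, y2)" "dist da y1 < q" "dist db y2 < q" by auto
        have "dist y1 a < 2 * q" using y da(2) dist_triangle[of y1 a da] by (simp add: dist_commute)
        moreover have "dist y2 b < 2 * q" using y db(2) dist_triangle[of y2 b db] by (simp add: dist_commute)
        ultimately have "dist y p \<le> dist y1 a + dist y2 b"
          using y p by (simp add: dist_Pair_Pair sqrt_sum_squares_le_sum)
        also have "\<dots> < e" using \<open>dist y1 a < 2 * q\<close> \<open>dist y2 b < 2 * q\<close> q by linarith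
        finally show "y \<in> G" using e(2) by blast
      qed
      have "p \<in> R (da, db, q)" unfolding R_def using sub p da db by (auto simp: dist_commute)
      then show "p \<in> \<Union> (R ` (Da \<times> Db \<times> \<rat>))" using da db q by blast
    qed
  qed
  moreover have "\<Union> (R ` (Da \<times> Db \<times> \<rat>)) \<in> sets (borel \<Otimes>\<^sub>M borel)"
    by (rule sets.countable_UN'') (auto simp: R_def Da Db countable_rat)
  ultimately show ?thesis by simp
qed

lemma cont_pair_measurable:
  fixes h :: "'a::metric_space \<times> 'b::metric_space \<Rightarrow> 'c::topological_space"
  assumes "compact (UNIV :: 'a set)" "compact (UNIV :: 'b set)" "continuous_on UNIV h"
  shows "h \<in> borel_measurable (borel \<Otimes>\<^sub>M borel)"
proof (rule borel_measurableI)
  fix S :: "'c set" assume "open S"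
  then have "open (h -` S)" using assms(3) by (simp add: continuous_on_open_vimage)
  then show "h -` S \<inter> space (borel \<Otimes>\<^sub>M borel) \<in> sets (borel \<Otimes>\<^sub>M borel)"
    using open_in_pair_borel[OF assms(1,2)] by (simp add: space_pair_measure)
qed

lemma int_vec_diff: "int_vec (k1 - k2) = int_vec k1 - int_vec k2"
  by (simp add: int_vec_def vec_eq_iff)

lemma int_vec_zero: "int_vec 0 = 0"
  by (simp add: int_vec_def vec_eq_iff)

lemma tdist_nonneg: "0 \<le> tdist x y"
  unfolding tdist_def by (rule cINF_greatest) auto

lemma tdist_le: "tdist x y \<le> norm (x - y + int_vec k)"
  unfolding tdist_def by (rule cINF_lower) (auto intro: bdd_belowI[where m=0])

lemma tdist_self: "tdist x x = 0"
  using tdist_le[of x x 0] tdist_nonneg[of x x] by (simp add: int_vec_zero)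

lemma tdist_le_sqrt: "tdist x y \<le> sqrt (real CARD('d))" for x y :: "real ^ 'd::finite"
proof -
  define k :: "int ^ 'd" where "k = (\<chi> i. - floor ((x - y) $ i))"
  define z where "z = x - y + int_vec k"
  have c: "0 \<le> z $ i \<and> z $ i < 1" for i
    unfolding z_def k_def int_vec_def by (simp add: floor_le_iff) linarith
  have "norm z = sqrt (\<Sum>i\<in>UNIV. (z $ i)\<^sup>2)"
    by (simp add: norm_vec_def L2_set_def)
  also have "\<dots> \<le> sqrt (\<Sum>i\<in>(UNIV::'d set). 1)"
  proof (intro real_sqrt_le_mono sum_mono)
    fix i show "(z $ i)\<^sup>2 \<le> 1" using c[of i] by (simp add: abs_square_le_1)
  qed
  finally show ?thesis using tdist_le[of x y k] unfolding z_def by simp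
qed

lemma tdist_half: "1/2 \<le> tdist (0 :: real ^ 'd::finite) (\<chi> i. 1/2)"
  unfolding tdist_def
proof (rule cINF_greatest)
  fix k :: "int ^ 'd"
  define i :: 'd where "i = undefined"
  have "\<bar>(0 - (\<chi> i. 1/2) + int_vec k) $ i\<bar> \<le> norm (0 - (\<chi> i. (1::real)/2) + int_vec k)"
    by (rule component_le_norm_cart)
  moreover have "1/2 \<le> \<bar>(0 - (\<chi> i. 1/2) + int_vec k) $ i\<bar>"
  proof -
    have e: "(0 - (\<chi> i. 1/2) + int_vec k) $ i = of_int (k $ i) - 1/2"
      by (simp add: int_vec_def)
    have "k $ i \<le> 0 \<or> k $ i \<ge> 1" by linarith
    then have "real_of_int (k $ i) \<le> 0 \<or> real_of_int (k $ i) \<ge> 1" by auto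
    then show ?thesis unfolding e by (auto simp: abs_if)
  qed
  ultimately show "1/2 \<le> norm (0 - (\<chi> i. 1/2) + int_vec k)" by linarith
qed auto

lemma bounded_int:
  fixes g :: "'a \<Rightarrow> 'b::euclidean_space"
  assumes M: "prob_space M" and g: "g \<in> borel_measurable M"
    and b: "\<And>p. p \<in> space M \<Longrightarrow> norm (g p) \<le> C"
  shows "integrable M g" "norm (integral\<^sup>L M g) \<le> C"
proof -
  interpret prob_space M by fact
  show ig: "integrable M g"
    by (rule integrable_const_bound[where B=C]) (use b g in auto)
  have "norm (integral\<^sup>L M g) \<le> integral\<^sup>L M (\<lambda>p. norm (g p))" by (rule integral_norm_bound)
  also have "\<dots> \<le> integral\<^sup>L M (\<lambda>p. C)"
    by (rule integral_mono) (use ig b in auto)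
  also have "\<dots> = C" by (simp add: prob_space)
  finally show "norm (integral\<^sup>L M g) \<le> C" .
qed

lemma int_upper:
  fixes g :: "'a \<Rightarrow> 'b::euclidean_space"
  assumes M: "prob_space M" and g: "g \<in> borel_measurable M"
    and b: "\<And>p. p \<in> space M \<Longrightarrow> norm (g p) \<le> C"
    and ae: "AE p in M. w \<bullet> g p \<le> c"
  shows "w \<bullet> integral\<^sup>L M g \<le> c"
proof -
  interpret prob_space M by fact
  have ig: "integrable M g" using bounded_int[OF M g b] by blast
  have "w \<bullet> integral\<^sup>L M g = integral\<^sup>L M (\<lambda>p. w \<bullet> g p)" using ig by simp
  also have "\<dots> \<le> integral\<^sup>L M (\<lambda>p. c)"
    by (rule integral_mono_AE) (use ig ae in auto)
  also have "\<dots> = c" by (simp add: prob_space)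
  finally show ?thesis .
qed

lemma int_lower:
  fixes g :: "'a \<Rightarrow> 'b::euclidean_space"
  assumes M: "prob_space M" and g: "g \<in> borel_measurable M"
    and b: "\<And>p. p \<in> space M \<Longrightarrow> norm (g p) \<le> C"
    and ae: "AE p in M. c \<le> w \<bullet> g p"
  shows "c \<le> w \<bullet> integral\<^sup>L M g"
proof -
  interpret prob_space M by fact
  have ig: "integrable M g" using bounded_int[OF M g b] by blast
  have "c = integral\<^sup>L M (\<lambda>p. c)" by (simp add: prob_space)
  also have "\<dots> \<le> integral\<^sup>L M (\<lambda>p. w \<bullet> g p)"
    by (rule integral_mono_AE) (use ig ae in auto)
  also have "\<dots> = w \<bullet> integral\<^sup>L M g" using ig by simp
  finally show ?thesis .
qed

lemma W2_self:
  fixes m :: "(real ^ 'd::finite) measure"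
  assumes "m \<in> P2"
  shows "W2 m m = 0"
proof -
  have pm: "prob_space m" and sm: "sets m = sets borel" using assms by (auto simp: P2_def)
  define \<pi> where "\<pi> = distr m (borel \<Otimes>\<^sub>M borel) (\<lambda>x. (x, x))"
  have meas: "(\<lambda>x. (x, x)) \<in> m \<rightarrow>\<^sub>M borel \<Otimes>\<^sub>M borel"
    using measurable_ident_sets[OF sm] by (intro measurable_Pair) auto
  have sp: "space m = UNIV" using sets_eq_imp_space_eq[OF sm] by simp
  have idm: "distr m borel (\<lambda>x. x) = m"
  proof (rule measure_eqI)
    show "sets (distr m borel (\<lambda>x. x)) = sets m" using sm by simp
    fix A assume "A \<in> sets (distr m borel (\<lambda>x. x))"
    then have A: "A \<in> sets borel" by simp
    show "emeasure (distr m borel (\<lambda>x. x)) A = emeasure m A"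
      using emeasure_distr[OF measurable_ident_sets[OF sm] A] sp by simp
  qed
  have c: "\<pi> \<in> couplings m m"
    unfolding couplings_def
  proof (intro CollectI conjI)
    show "prob_space \<pi>" unfolding \<pi>_def by (rule prob_space.prob_space_distr[OF pm meas])
    show "sets \<pi> = sets (borel \<Otimes>\<^sub>M borel)" unfolding \<pi>_def by simp
    have "distr \<pi> borel fst = distr m borel (fst \<circ> (\<lambda>x. (x, x)))"
      unfolding \<pi>_def by (rule distr_distr[OF measurable_fst meas])
    also have "\<dots> = m" using idm by (simp add: comp_def)
    finally show "distr \<pi> borel fst = m" .
    have "distr \<pi> borel snd = distr m borel (snd \<circ> (\<lambda>x. (x, x)))"
      unfolding \<pi>_def by (rule distr_distr[OF measurable_snd meas])
    also have "\<dots> = m" using idm by (simp add: comp_def)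
    finally show "distr \<pi> borel snd = m" .
  qed
  have i0: "integral\<^sup>L \<pi> (\<lambda>p. (tdist (fst p) (snd p))\<^sup>2) = 0"
  proof (cases "integrable \<pi> (\<lambda>p. (tdist (fst p) (snd p))\<^sup>2)")
    case True
    have se: "sets (borel \<Otimes>\<^sub>M borel :: ((real ^ 'd) \<times> (real ^ 'd)) measure) = sets \<pi>" unfolding \<pi>_def by simp
    have e: "(borel_measurable (borel \<Otimes>\<^sub>M borel :: ((real ^ 'd) \<times> (real ^ 'd)) measure) :: (_ \<Rightarrow> real) set) = borel_measurable \<pi>"
      by (rule measurable_cong_sets[OF se refl])
    have "(\<lambda>p. (tdist (fst p) (snd p))\<^sup>2) \<in> borel_measurable (borel \<Otimes>\<^sub>M borel :: ((real ^ 'd) \<times> (real ^ 'd)) measure)"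
      unfolding e by (rule borel_measurable_integrable[OF True])
    then show ?thesis unfolding \<pi>_def
      by (simp add: integral_distr[OF meas] tdist_self)
  next
    case False
    then show ?thesis by (rule not_integrable_integral_eq)
  qed
  let ?S = "(\<lambda>\<pi>. integral\<^sup>L \<pi> (\<lambda>p. (tdist (fst p) (snd p))\<^sup>2)) ` couplings m m"
  have lb: "\<And>y. y \<in> ?S \<Longrightarrow> 0 \<le> y" by auto
  have "Inf ?S \<le> 0"
    using c i0 by (intro cInf_lower2[of 0]) (auto intro!: bdd_belowI[where m=0])
  moreover have "0 \<le> Inf ?S" using c lb by (intro cInf_greatest) auto
  ultimately show ?thesis unfolding W2_def by simp
qed

lemma set_int_const_Icc:
  fixes c :: real
  assumes "a \<le> b"
  shows "set_integrable lborel {a..b} (\<lambda>_. c)" "(LINT t:{a..b}|lborel. c) = c * (b - a)"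
proof -
  have "integrable lborel (\<lambda>x. c * indicator {a..b} x)"
    by (rule borel_integrable_atLeastAtMost) auto
  then show "set_integrable lborel {a..b} (\<lambda>_. c)"
    unfolding set_integrable_def by (simp add: mult.commute)
  show "(LINT t:{a..b}|lborel. c) = c * (b - a)"
    using assms by (simp add: set_integral_const)
qed

lemma set_int_norm_le:
  fixes F :: "real \<Rightarrow> 'b::euclidean_space"
  assumes F: "set_integrable lborel {a..b} F" and ab: "a \<le> b"
    and bnd: "\<And>t. t \<in> {a..b} \<Longrightarrow> norm (F t) \<le> C"
  shows "norm (LINT t:{a..b}|lborel. F t) \<le> C * (b - a)"
proof -
  have "norm (LINT t:{a..b}|lborel. F t) \<le> (LINT t:{a..b}|lborel. norm (F t))"
    by (rule set_integral_norm_bound[OF F])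
  also have "\<dots> \<le> (LINT t:{a..b}|lborel. C)"
    by (rule set_integral_mono[OF set_integrable_norm[OF F] set_int_const_Icc(1)[OF ab] bnd])
  also have "\<dots> = C * (b - a)" by (rule set_int_const_Icc(2)[OF ab])
  finally show ?thesis .
qed

lemma set_int_inner:
  fixes F :: "real \<Rightarrow> 'b::euclidean_space"
  assumes F: "set_integrable M S F"
  shows "set_integrable M S (\<lambda>t. w \<bullet> F t)" "w \<bullet> (LINT t:S|M. F t) = (LINT t:S|M. w \<bullet> F t)"
proof -
  have i: "integrable M (\<lambda>t. indicator S t *\<^sub>R F t)" using F unfolding set_integrable_def .
  have e: "(\<lambda>t. w \<bullet> (indicator S t *\<^sub>R F t)) = (\<lambda>t. indicator S t *\<^sub>R (w \<bullet> F t))"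
    by (auto simp: indicator_def)
  show "set_integrable M S (\<lambda>t. w \<bullet> F t)"
    unfolding set_integrable_def using integrable_inner_right[OF i, of w] unfolding e .
  show "w \<bullet> (LINT t:S|M. F t) = (LINT t:S|M. w \<bullet> F t)"
    unfolding set_lebesgue_integral_def using integral_inner_right[of w M "\<lambda>t. indicator S t *\<^sub>R F t"] i e
    by simp
qed

lemma set_int_inner_upper:
  fixes F :: "real \<Rightarrow> 'b::euclidean_space"
  assumes F: "set_integrable lborel {a..b} F" and ab: "a \<le> b"
    and bnd: "\<And>t. t \<in> {a..b} \<Longrightarrow> w \<bullet> F t \<le> c"
  shows "w \<bullet> (LINT t:{a..b}|lborel. F t) \<le> c * (b - a)"
proof -
  have "w \<bullet> (LINT t:{a..b}|lborel. F t) = (LINT t:{a..b}|lborel. w \<bullet> F t)" by (rule set_int_inner(2)[OF F])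
  also have "\<dots> \<le> (LINT t:{a..b}|lborel. c)"
    by (rule set_integral_mono[OF set_int_inner(1)[OF F] set_int_const_Icc(1)[OF ab] bnd])
  also have "\<dots> = c * (b - a)" by (rule set_int_const_Icc(2)[OF ab])
  finally show ?thesis .
qed

lemma set_int_inner_lower:
  fixes F :: "real \<Rightarrow> 'b::euclidean_space"
  assumes F: "set_integrable lborel {a..b} F" and ab: "a \<le> b"
    and bnd: "\<And>t. t \<in> {a..b} \<Longrightarrow> c \<le> w \<bullet> F t"
  shows "c * (b - a) \<le> w \<bullet> (LINT t:{a..b}|lborel. F t)"
proof -
  have "c * (b - a) = (LINT t:{a..b}|lborel. c)" by (rule set_int_const_Icc(2)[OF ab, symmetric])
  also have "\<dots> \<le> (LINT t:{a..b}|lborel. w \<bullet> F t)"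
    by (rule set_integral_mono[OF set_int_const_Icc(1)[OF ab] set_int_inner(1)[OF F] bnd])
  also have "\<dots> = w \<bullet> (LINT t:{a..b}|lborel. F t)" by (rule set_int_inner(2)[OF F, symmetric])
  finally show ?thesis .
qed

lemma AE_fst_return:
  fixes a :: "'a::metric_space"
  assumes "prob_space N"
  shows "AE p in (return borel a \<Otimes>\<^sub>M N). fst p = a"
proof -
  interpret pair_sigma_finite "return borel a" N
    unfolding pair_sigma_finite_def
    using assms by (auto intro!: prob_space_imp_sigma_finite prob_space_return)
  have s: "{x \<in> space (return borel a \<Otimes>\<^sub>M N). fst x = a} = {a} \<times> space N"
    by (auto simp: space_pair_measure)
  have "{a} \<in> sets (return borel a)" by simp
  then have "{a} \<times> space N \<in> sets (return borel a \<Otimes>\<^sub>M N)" by (intro pair_measureI) auto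
  moreover have "AE x in return borel a. x \<in> {a}"
    by (subst AE_return) (auto intro!: pred_sets2[where N=borel])
  then have "AE x in return borel a. AE y in N. fst (x, y) = a" by eventually_elim auto
  ultimately show ?thesis using s by (intro AE_pair_measure) auto
qed

lemma AE_snd_return:
  fixes a :: "'a::metric_space"
  assumes "prob_space N"
  shows "AE p in (N \<Otimes>\<^sub>M return borel a). snd p = a"
proof -
  interpret pair_sigma_finite N "return borel a"
    unfolding pair_sigma_finite_def
    using assms by (auto intro!: prob_space_imp_sigma_finite prob_space_return)
  have s: "{x \<in> space (N \<Otimes>\<^sub>M return borel a). snd x = a} = space N \<times> {a}"
    by (auto simp: space_pair_measure)
  have "{a} \<in> sets (return borel a)" by simp
  then have "space N \<times> {a} \<in> sets (N \<Otimes>\<^sub>M return borel a)" by (intro pair_measureI) auto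
  moreover have r: "AE y in return borel a. y \<in> {a}"
    by (subst AE_return) (auto intro!: pred_sets2[where N=borel])
  have "AE x in N. AE y in return borel a. snd (x, y) = a" by (rule AE_I2) (use r in simp)
  ultimately show ?thesis using s \<open>AE x in N. AE y in return borel a. snd (x, y) = a\<close> by (intro AE_pair_measure) auto
qed

lemma final_arith:
  fixes nw W L C0 e E wm sd Vp Vm dA dB nd :: real
  assumes "0 \<le> nw" "0 \<le> L" "0 \<le> C0" "0 \<le> e" "0 \<le> wm" "nw \<le> sd"
    and "E = wm + 2 * L * C0 * e"
    and "Vp \<le> Vm"
    and "dA \<le> (Vp + nw * E) * e"
    and "(Vm - nw * (L * nw + L * W) - nw * E) * e \<le> dB"
    and "nd \<le> 2 * C0 * e" "0 \<le> nd"
  shows "nw\<^sup>2 + 2 * (dA - dB) + nd\<^sup>2 \<le> nw\<^sup>2 * (1 + 3 * L * e) + L * W\<^sup>2 * e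
           + (2 * (2 * sd * wm + 4 * sd * L * C0 * e) + 4 * C0\<^sup>2 * e) * e"
proof -
  have "dA - dB \<le> (Vp + nw * E) * e - (Vm - nw * (L * nw + L * W) - nw * E) * e" using assms by linarith
  also have "\<dots> = (Vp - Vm) * e + (2 * nw * E + L * nw\<^sup>2 + L * nw * W) * e" by (simp add: algebra_simps power2_eq_square)
  also have "\<dots> \<le> (2 * nw * E + L * nw\<^sup>2 + L * nw * W) * e"
    using assms by (simp add: mult_nonpos_nonneg)
  finally have 1: "dA - dB \<le> (2 * nw * E + L * nw\<^sup>2 + L * nw * W) * e" .
  have 2: "2 * L * nw * W \<le> L * nw\<^sup>2 + L * W\<^sup>2"
  proof -
    have "0 \<le> L * (nw - W)\<^sup>2" using assms by simp
    then show ?thesis by (simp add: algebra_simps power2_eq_square)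
  qed
  have 3: "nw * E \<le> sd * wm + 2 * sd * L * C0 * e"
  proof -
    have "nw * E = nw * wm + 2 * nw * (L * C0 * e)" using assms by (simp add: algebra_simps)
    also have "\<dots> \<le> sd * wm + 2 * sd * (L * C0 * e)"
      using assms by (intro add_mono mult_right_mono mult_left_mono mult_nonneg_nonneg) auto
    finally show ?thesis by (simp add: algebra_simps)
  qed
  have 4: "nd\<^sup>2 \<le> 4 * C0\<^sup>2 * e * e"
  proof -
    have "nd\<^sup>2 \<le> (2 * C0 * e)\<^sup>2" using assms by (intro power_mono) auto
    then show ?thesis by (simp add: algebra_simps power2_eq_square)
  qed
  have "2 * (dA - dB) \<le> (4 * nw * E + 2 * L * nw\<^sup>2 + 2 * L * nw * W) * e"
    using mult_left_mono[OF 1, of 2] by (simp add: algebra_simps)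
  also have "\<dots> \<le> (4 * (sd * wm + 2 * sd * L * C0 * e) + 3 * L * nw\<^sup>2 + L * W\<^sup>2) * e"
    using 2 3 assms by (intro mult_right_mono) auto
  finally have 5: "2 * (dA - dB) \<le> (4 * (sd * wm + 2 * sd * L * C0 * e) + 3 * L * nw\<^sup>2 + L * W\<^sup>2) * e" .
  show ?thesis using 4 5 by (simp add: algebra_simps)
qed

lemma meas_pair_cong:
  fixes g :: "'a::topological_space \<times> 'b::topological_space \<Rightarrow> 'c::topological_space"
    and M1 :: "'a measure" and M2 :: "'b measure"
  assumes "sets M1 = sets borel" "sets M2 = sets borel" "g \<in> borel_measurable (borel \<Otimes>\<^sub>M borel)"
  shows "g \<in> borel_measurable (M1 \<Otimes>\<^sub>M M2)"
proof -
  have se: "sets (M1 \<Otimes>\<^sub>M M2) = sets (borel \<Otimes>\<^sub>M borel :: ('a \<times> 'b) measure)"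
    by (rule sets_pair_measure_cong[OF assms(1,2)])
  have e: "(borel_measurable (M1 \<Otimes>\<^sub>M M2) :: ('a \<times> 'b \<Rightarrow> 'c) set) = borel_measurable (borel \<Otimes>\<^sub>M borel)"
    by (rule measurable_cong_sets[OF se refl])
  show ?thesis unfolding e by (rule assms(3))
qed

lemma inner_le_err:
  fixes w a b :: "'a::real_inner"
  shows "w \<bullet> a \<le> w \<bullet> b + norm w * norm (a - b)"
proof -
  have "w \<bullet> a - w \<bullet> b = w \<bullet> (a - b)" by (simp add: inner_diff_right)
  also have "\<dots> \<le> norm w * norm (a - b)" by (rule norm_cauchy_schwarz)
  finally show ?thesis by simp
qed

theorem lemma1:
  fixes f :: "real \<Rightarrow> real ^ 'd::finite \<Rightarrow> (real ^ 'd) measure \<Rightarrow> 'u::metric_space \<Rightarrow> 'v::metric_space \<Rightarrow> real ^ 'd"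
    and T L C0 :: real and wmod :: "real \<Rightarrow> real"
    and s r :: real and xs ys :: "real ^ 'd"
    and m \<nu> :: "real \<Rightarrow> (real ^ 'd) measure"
    and us :: 'u and vs :: 'v
    and \<xi> :: "real \<Rightarrow> 'u measure" and \<zeta> :: "real \<Rightarrow> 'v measure"
    and x y :: "real \<Rightarrow> real ^ 'd"
  assumes T_pos: "T > 0"
    and U_compact: "compact (UNIV :: 'u set)"
    and V_compact: "compact (UNIV :: 'v set)"
    and f_cont: "\<And>tn xn mn un vn t x0 m0 u v.
        (\<forall>n. tn n \<in> {0..T} \<and> mn n \<in> P2) \<Longrightarrow> t \<in> {0..T} \<Longrightarrow> m0 \<in> P2 \<Longrightarrow>
        tn \<longlonglongrightarrow> t \<Longrightarrow> (\<lambda>n. tdist (xn n) x0) \<longlonglongrightarrow> 0 \<Longrightarrow>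
        (\<lambda>n. W2 (mn n) m0) \<longlonglongrightarrow> 0 \<Longrightarrow> un \<longlonglongrightarrow> u \<Longrightarrow> vn \<longlonglongrightarrow> v \<Longrightarrow>
        (\<lambda>n. f (tn n) (xn n) (mn n) (un n) (vn n)) \<longlonglongrightarrow> f t x0 m0 u v"
    and f_lip: "\<And>t x1 x2 m1 m2 u v. t \<in> {0..T} \<Longrightarrow> m1 \<in> P2 \<Longrightarrow> m2 \<in> P2 \<Longrightarrow>
        norm (f t x1 m1 u v - f t x2 m2 u v) \<le> L * tdist x1 x2 + L * W2 m1 m2"
    and isaacs: "\<And>t x0 m0 w. t \<in> {0..T} \<Longrightarrow> m0 \<in> P2 \<Longrightarrow>
        (INF u. SUP v. inner w (f t x0 m0 u v)) = (SUP v. INF u. inner w (f t x0 m0 u v))"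
    and C0_bound: "\<And>t x0 m0 u v. t \<in> {0..T} \<Longrightarrow> m0 \<in> P2 \<Longrightarrow> norm (f t x0 m0 u v) \<le> C0"
    and wmod_even: "\<And>e. wmod (- e) = wmod e"
    and wmod_nonneg: "\<And>e. wmod e \<ge> 0"
    and wmod_mono: "mono_on {0..} wmod"
    and wmod_zero: "wmod 0 = 0"
    and wmod_cont: "isCont wmod 0"
    and wmod_mod: "\<And>t t' x0 m0 u v. t \<in> {0..T} \<Longrightarrow> t' \<in> {0..T} \<Longrightarrow> m0 \<in> P2 \<Longrightarrow>
        norm (f t x0 m0 u v - f t' x0 m0 u v) \<le> wmod (t - t')"
    and s_r: "0 \<le> s" "s \<le> r" "r \<le> T"
    and m_in: "m \<in> flows_R T C0"
    and \<nu>_in: "\<nu> \<in> flows_R T C0"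
    and extremal: "\<exists>xr yr :: real ^ 'd.
        (\<exists>k. xr = xs + int_vec k) \<and> (\<exists>k. yr = ys + int_vec k) \<and>
        norm (xr - yr) = tdist xs ys \<and>
        (\<forall>u. (SUP v. inner (xr - yr) (f s xs (m s) us v))
              \<le> (SUP v. inner (xr - yr) (f s xs (m s) u v))) \<and>
        (\<forall>v. (INF u. inner (xr - yr) (f s xs (m s) u v))
              \<le> (INF u. inner (xr - yr) (f s xs (m s) u vs)))"
    and \<xi>_ctrl: "relaxed_ctrl T \<xi>"
    and \<zeta>_ctrl: "relaxed_ctrl T \<zeta>"
    and x_traj: "is_traj T f s xs m (prod_ctrl (dirac_ctrl us) \<zeta>) x"
    and y_traj: "is_traj T f s ys \<nu> (prod_ctrl \<xi> (dirac_ctrl vs)) y"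
  shows "(tdist (x r) (y r))\<^sup>2 \<le> (tdist xs ys)\<^sup>2 * (1 + 3 * L * (r - s))
           + L * (W2 (m s) (\<nu> s))\<^sup>2 * (r - s)
           + varpi2 CARD('d) L C0 wmod (r - s) * (r - s)"
proof -
  have sT: "s \<in> {0..T}" "r \<in> {0..T}" using s_r by auto
  have mP: "\<And>t. t \<in> {0..T} \<Longrightarrow> m t \<in> P2" using m_in by (auto simp: flows_R_def)
  have \<nu>P: "\<And>t. t \<in> {0..T} \<Longrightarrow> \<nu> t \<in> P2" using \<nu>_in by (auto simp: flows_R_def)
  have mL: "\<And>a b. a \<in> {0..T} \<Longrightarrow> b \<in> {0..T} \<Longrightarrow> W2 (m a) (m b) \<le> C0 * \<bar>a - b\<bar>"
    using m_in by (auto simp: flows_R_def)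
  have \<nu>L: "\<And>a b. a \<in> {0..T} \<Longrightarrow> b \<in> {0..T} \<Longrightarrow> W2 (\<nu> a) (\<nu> b) \<le> C0 * \<bar>a - b\<bar>"
    using \<nu>_in by (auto simp: flows_R_def)
  have C0_nn: "0 \<le> C0" using C0_bound[OF sT(1) mP[OF sT(1)], of xs us vs] norm_ge_zero order_trans by blast
  have L_nn: "0 \<le> L"
  proof -
    have "norm (f s 0 (m s) us vs - f s (\<chi> i. 1/2) (m s) us vs) \<le> L * tdist (0 :: real ^ 'd) (\<chi> i. 1/2) + L * W2 (m s) (m s)"
      (is "?n \<le> _") by (rule f_lip[OF sT(1) mP[OF sT(1)] mP[OF sT(1)]])
    then have "?n \<le> L * tdist (0 :: real ^ 'd) (\<chi> i. 1/2)"
      by (simp add: W2_self[OF mP[OF sT(1)]])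
    then have "0 \<le> L * tdist (0 :: real ^ 'd) (\<chi> i. 1/2)"
      by (rule order_trans[OF norm_ge_zero])
    moreover have "0 < tdist (0 :: real ^ 'd) (\<chi> i. 1/2)" using tdist_half[where 'd='d] by linarith
    ultimately show ?thesis by (simp add: zero_le_mult_iff)
  qed
  have \<zeta>P: "\<And>t. t \<in> {0..T} \<Longrightarrow> prob_space (\<zeta> t) \<and> sets (\<zeta> t) = sets borel"
    using \<zeta>_ctrl by (auto simp: relaxed_ctrl_def)
  have \<xi>P: "\<And>t. t \<in> {0..T} \<Longrightarrow> prob_space (\<xi> t) \<and> sets (\<xi> t) = sets borel"
    using \<xi>_ctrl by (auto simp: relaxed_ctrl_def)
  have fcont: "continuous_on UNIV (\<lambda>p. f t x0 m0 (fst p) (snd p))" if t: "t \<in> {0..T}" and m0: "m0 \<in> P2" for t x0 m0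
  proof (rule continuous_on_sequentiallyI)
    fix q :: "nat \<Rightarrow> 'u \<times> 'v" and a assume "q \<longlonglongrightarrow> a"
    then have "(\<lambda>n. fst (q n)) \<longlonglongrightarrow> fst a" "(\<lambda>n. snd (q n)) \<longlonglongrightarrow> snd a"
      by (auto intro: tendsto_fst tendsto_snd)
    then show "(\<lambda>n. f t x0 m0 (fst (q n)) (snd (q n))) \<longlonglongrightarrow> f t x0 m0 (fst a) (snd a)"
      using f_cont[of "\<lambda>_. t" "\<lambda>_. m0" t m0 "\<lambda>_. x0" x0 "\<lambda>n. fst (q n)" "fst a" "\<lambda>n. snd (q n)" "snd a"]
        t m0 by (simp add: tdist_self W2_self)
  qed
  have fmeas: "(\<lambda>p. f t x0 m0 (fst p) (snd p)) \<in> borel_measurable (borel \<Otimes>\<^sub>M borel)"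
    if "t \<in> {0..T}" "m0 \<in> P2" for t x0 m0
    by (rule cont_pair_measurable[OF U_compact V_compact fcont[OF that]])
  define A where "A = (\<lambda>t. integral\<^sup>L (prod_ctrl (dirac_ctrl us) \<zeta> t) (\<lambda>p. f t (x t) (m t) (fst p) (snd p)))"
  define B where "B = (\<lambda>t. integral\<^sup>L (prod_ctrl \<xi> (dirac_ctrl vs) t) (\<lambda>p. f t (y t) (\<nu> t) (fst p) (snd p)))"
  have Mx: "prob_space (prod_ctrl (dirac_ctrl us) \<zeta> t)"
    "(\<lambda>p. f t (x t) (m t) (fst p) (snd p)) \<in> borel_measurable (prod_ctrl (dirac_ctrl us) \<zeta> t)"
    "AE p in prod_ctrl (dirac_ctrl us) \<zeta> t. fst p = us"
    if t: "t \<in> {0..T}" for t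
  proof -
    show "prob_space (prod_ctrl (dirac_ctrl us) \<zeta> t)"
      unfolding prod_ctrl_def dirac_ctrl_def using \<zeta>P[OF t]
      by (intro prob_space_pair prob_space_return) auto
    show "(\<lambda>p. f t (x t) (m t) (fst p) (snd p)) \<in> borel_measurable (prod_ctrl (dirac_ctrl us) \<zeta> t)"
      unfolding prod_ctrl_def dirac_ctrl_def
      by (rule meas_pair_cong[OF _ _ fmeas[OF t mP[OF t]]]) (use \<zeta>P[OF t] in simp_all)
    show "AE p in prod_ctrl (dirac_ctrl us) \<zeta> t. fst p = us"
      unfolding prod_ctrl_def dirac_ctrl_def using \<zeta>P[OF t] by (intro AE_fst_return) auto
  qed
  have My: "prob_space (prod_ctrl \<xi> (dirac_ctrl vs) t)"
    "(\<lambda>p. f t (y t) (\<nu> t) (fst p) (snd p)) \<in> borel_measurable (prod_ctrl \<xi> (dirac_ctrl vs) t)"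
    "AE p in prod_ctrl \<xi> (dirac_ctrl vs) t. snd p = vs"
    if t: "t \<in> {0..T}" for t
  proof -
    show "prob_space (prod_ctrl \<xi> (dirac_ctrl vs) t)"
      unfolding prod_ctrl_def dirac_ctrl_def using \<xi>P[OF t]
      by (intro prob_space_pair prob_space_return) auto
    show "(\<lambda>p. f t (y t) (\<nu> t) (fst p) (snd p)) \<in> borel_measurable (prod_ctrl \<xi> (dirac_ctrl vs) t)"
      unfolding prod_ctrl_def dirac_ctrl_def
      by (rule meas_pair_cong[OF _ _ fmeas[OF t \<nu>P[OF t]]]) (use \<xi>P[OF t] in simp_all)
    show "AE p in prod_ctrl \<xi> (dirac_ctrl vs) t. snd p = vs"
      unfolding prod_ctrl_def dirac_ctrl_def using \<xi>P[OF t] by (intro AE_snd_return) auto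
  qed
  have A_norm: "norm (A t) \<le> C0" if t: "t \<in> {0..T}" for t
    unfolding A_def by (rule bounded_int(2)[OF Mx(1,2)[OF t]]) (rule C0_bound[OF t mP[OF t]])
  have B_norm: "norm (B t) \<le> C0" if t: "t \<in> {0..T}" for t
    unfolding B_def by (rule bounded_int(2)[OF My(1,2)[OF t]]) (rule C0_bound[OF t \<nu>P[OF t]])
  have A_int: "set_integrable lborel {0..T} A" using x_traj unfolding is_traj_def A_def by blast
  have B_int: "set_integrable lborel {0..T} B" using y_traj unfolding is_traj_def B_def by blast
  have A_int': "set_integrable lborel {s..t} A" if "t \<le> T" for t
    using s_r that by (intro set_integrable_subset[OF A_int]) auto
  have B_int': "set_integrable lborel {s..t} B" if "t \<le> T" for t
    using s_r that by (intro set_integrable_subset[OF B_int]) auto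
  have x_eq: "x t = xs + (LINT \<tau>:{s..t}|lborel. A \<tau>)" if "s \<le> t" "t \<le> T" for t
    using x_traj that s_r unfolding is_traj_def A_def by (simp add: interval_integral_Icc)
  have y_eq: "y t = ys + (LINT \<tau>:{s..t}|lborel. B \<tau>)" if "s \<le> t" "t \<le> T" for t
    using y_traj that s_r unfolding is_traj_def B_def by (simp add: interval_integral_Icc)
  have x_mov: "tdist (x t) xs \<le> C0 * (r - s)" if "t \<in> {s..r}" for t
  proof -
    have "tdist (x t) xs \<le> norm (x t - xs + int_vec 0)" by (rule tdist_le)
    also have "\<dots> = norm (LINT \<tau>:{s..t}|lborel. A \<tau>)" using x_eq[of t] that s_r by (simp add: int_vec_zero)
    also have "\<dots> \<le> C0 * (t - s)"
      using that s_r by (intro set_int_norm_le A_int' A_norm) auto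
    also have "\<dots> \<le> C0 * (r - s)" using that C0_nn by (intro mult_left_mono) auto
    finally show ?thesis .
  qed
  have y_mov: "tdist (y t) ys \<le> C0 * (r - s)" if "t \<in> {s..r}" for t
  proof -
    have "tdist (y t) ys \<le> norm (y t - ys + int_vec 0)" by (rule tdist_le)
    also have "\<dots> = norm (LINT \<tau>:{s..t}|lborel. B \<tau>)" using y_eq[of t] that s_r by (simp add: int_vec_zero)
    also have "\<dots> \<le> C0 * (t - s)"
      using that s_r by (intro set_int_norm_le B_int' B_norm) auto
    also have "\<dots> \<le> C0 * (r - s)" using that C0_nn by (intro mult_left_mono) auto
    finally show ?thesis .
  qed
  define E where "E = wmod (r - s) + 2 * L * C0 * (r - s)"
  have err: "norm (f t z (mu t) u v - f s z0 (mu s) u v) \<le> E"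
    if t: "t \<in> {s..r}" and mu: "mu \<in> flows_R T C0" and z: "tdist z z0 \<le> C0 * (r - s)" for t z z0 mu u v
  proof -
    have t0: "t \<in> {0..T}" using t s_r by auto
    have muP: "mu t \<in> P2" "mu s \<in> P2" using mu t0 sT by (auto simp: flows_R_def)
    have muL: "W2 (mu t) (mu s) \<le> C0 * \<bar>t - s\<bar>" using mu t0 sT by (auto simp: flows_R_def)
    have "norm (f t z (mu t) u v - f s z0 (mu s) u v)
        \<le> norm (f t z (mu t) u v - f s z (mu t) u v) + norm (f s z (mu t) u v - f s z0 (mu s) u v)"
      using norm_triangle_ineq[of "f t z (mu t) u v - f s z (mu t) u v" "f s z (mu t) u v - f s z0 (mu s) u v"]
      by simp
    also have "\<dots> \<le> wmod (t - s) + (L * tdist z z0 + L * W2 (mu t) (mu s))"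
      by (intro add_mono wmod_mod f_lip t0 sT muP)
    also have "\<dots> \<le> wmod (r - s) + (L * (C0 * (r - s)) + L * (C0 * (r - s)))"
    proof (intro add_mono mult_left_mono L_nn)
      show "wmod (t - s) \<le> wmod (r - s)" using t by (intro mono_onD[OF wmod_mono]) auto
      show "tdist z z0 \<le> C0 * (r - s)" by (rule z)
      show "W2 (mu t) (mu s) \<le> C0 * (r - s)"
        using muL t C0_nn by (smt (verit) atLeastAtMost_iff mult_left_mono)
    qed
    finally show ?thesis unfolding E_def by (simp add: algebra_simps)
  qed
  obtain xr yr k1 k2 where xr: "xr = xs + int_vec k1" and yr: "yr = ys + int_vec k2"
    and nwdef: "norm (xr - yr) = tdist xs ys"
    and ext1: "\<And>u. (SUP v. inner (xr - yr) (f s xs (m s) us v)) \<le> (SUP v. inner (xr - yr) (f s xs (m s) u v))"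
    and ext2: "\<And>v. (INF u. inner (xr - yr) (f s xs (m s) u v)) \<le> (INF u. inner (xr - yr) (f s xs (m s) u vs))"
    using extremal by blast
  define w where "w = xr - yr"
  define nw where "nw = tdist xs ys"
  define W where "W = W2 (m s) (\<nu> s)"
  define Vp where "Vp = (SUP v. w \<bullet> f s xs (m s) us v)"
  define Vm where "Vm = (INF u. w \<bullet> f s xs (m s) u vs)"
  have nw: "norm w = nw" unfolding w_def nw_def by (rule nwdef)
  have nw_nn: "0 \<le> nw" unfolding nw_def by (rule tdist_nonneg)
  have ibnd: "\<bar>w \<bullet> f s xs (m s) u v\<bar> \<le> nw * C0" for u v
  proof -
    have "\<bar>w \<bullet> f s xs (m s) u v\<bar> \<le> norm w * norm (f s xs (m s) u v)" by (rule Cauchy_Schwarz_ineq2)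
    also have "\<dots> \<le> nw * C0" unfolding nw using nw_nn by (intro mult_left_mono C0_bound sT mP) auto
    finally show ?thesis .
  qed
  have Vp_up: "w \<bullet> f s xs (m s) us v \<le> Vp" for v
    unfolding Vp_def using ibnd by (intro cSUP_upper bdd_aboveI2[where M="nw * C0"]) (auto simp: abs_le_iff)
  have Vm_lo: "Vm \<le> w \<bullet> f s xs (m s) u vs" for u
  proof -
    have "- (nw * C0) \<le> w \<bullet> f s xs (m s) u vs" for u using ibnd[of u vs] by linarith
    then show ?thesis unfolding Vm_def by (intro cINF_lower bdd_belowI2[where m="- (nw * C0)"]) auto
  qed
  have VpVm: "Vp \<le> Vm"
  proof -
    have "Vp \<le> (INF u. SUP v. w \<bullet> f s xs (m s) u v)"
      unfolding Vp_def w_def by (intro cINF_greatest ext1) auto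
    also have "\<dots> = (SUP v. INF u. w \<bullet> f s xs (m s) u v)" by (rule isaacs[OF sT(1) mP[OF sT(1)]])
    also have "\<dots> \<le> Vm"
      unfolding Vm_def w_def by (intro cSUP_least ext2) auto
    finally show ?thesis .
  qed
  have FA: "w \<bullet> A t \<le> Vp + nw * E" if t: "t \<in> {s..r}" for t
  proof -
    have t0: "t \<in> {0..T}" using t s_r by auto
    show ?thesis unfolding A_def
    proof (rule int_upper[OF Mx(1,2)[OF t0]])
      show "\<And>p. norm (f t (x t) (m t) (fst p) (snd p)) \<le> C0" by (rule C0_bound[OF t0 mP[OF t0]])
      show "AE p in prod_ctrl (dirac_ctrl us) \<zeta> t. w \<bullet> f t (x t) (m t) (fst p) (snd p) \<le> Vp + nw * E"
        using Mx(3)[OF t0]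
      proof eventually_elim
        case (elim p)
        have "w \<bullet> f t (x t) (m t) us (snd p) \<le> w \<bullet> f s xs (m s) us (snd p)
              + norm w * norm (f t (x t) (m t) us (snd p) - f s xs (m s) us (snd p))"
          by (rule inner_le_err)
        also have "\<dots> \<le> Vp + norm w * E"
          using Vp_up err[OF t m_in x_mov[OF t]] by (intro add_mono mult_left_mono) auto
        finally show ?case using elim nw by simp
      qed
    qed
  qed
  have FB: "Vm - nw * (L * nw + L * W) - nw * E \<le> w \<bullet> B t" if t: "t \<in> {s..r}" for t
  proof -
    have t0: "t \<in> {0..T}" using t s_r by auto
    show ?thesis unfolding B_def
    proof (rule int_lower[OF My(1,2)[OF t0]])
      show "\<And>p. norm (f t (y t) (\<nu> t) (fst p) (snd p)) \<le> C0" by (rule C0_bound[OF t0 \<nu>P[OF t0]])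
      show "AE p in prod_ctrl \<xi> (dirac_ctrl vs) t. Vm - nw * (L * nw + L * W) - nw * E \<le> w \<bullet> f t (y t) (\<nu> t) (fst p) (snd p)"
        using My(3)[OF t0]
      proof eventually_elim
        case (elim p)
        let ?u = "fst p"
        have 1: "w \<bullet> f s ys (\<nu> s) ?u vs \<le> w \<bullet> f t (y t) (\<nu> t) ?u vs
              + norm w * norm (f s ys (\<nu> s) ?u vs - f t (y t) (\<nu> t) ?u vs)"
          by (rule inner_le_err)
        have 2: "norm (f s ys (\<nu> s) ?u vs - f t (y t) (\<nu> t) ?u vs) \<le> E"
          using err[OF t \<nu>_in y_mov[OF t]] by (simp add: norm_minus_commute)
        have 3: "w \<bullet> f s xs (m s) ?u vs \<le> w \<bullet> f s ys (\<nu> s) ?u vs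
              + norm w * norm (f s xs (m s) ?u vs - f s ys (\<nu> s) ?u vs)"
          by (rule inner_le_err)
        have 4: "norm (f s xs (m s) ?u vs - f s ys (\<nu> s) ?u vs) \<le> L * nw + L * W"
          unfolding nw_def W_def by (rule f_lip[OF sT(1) mP[OF sT(1)] \<nu>P[OF sT(1)]])
        have "nw * norm (f s ys (\<nu> s) ?u vs - f t (y t) (\<nu> t) ?u vs) \<le> nw * E"
          using 2 nw_nn by (rule mult_left_mono)
        moreover have "nw * norm (f s xs (m s) ?u vs - f s ys (\<nu> s) ?u vs) \<le> nw * (L * nw + L * W)"
          using 4 nw_nn by (rule mult_left_mono)
        ultimately show ?case using elim 1 3 Vm_lo[of ?u] nw by simp
      qed
    qed
  qed
  define Ia where "Ia = (LINT \<tau>:{s..r}|lborel. A \<tau>)"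
  define Ib where "Ib = (LINT \<tau>:{s..r}|lborel. B \<tau>)"
  have xr_eq: "x r = xs + Ia" unfolding Ia_def using x_eq s_r by simp
  have yr_eq: "y r = ys + Ib" unfolding Ib_def using y_eq s_r by simp
  have dA: "w \<bullet> Ia \<le> (Vp + nw * E) * (r - s)"
    unfolding Ia_def using s_r by (intro set_int_inner_upper A_int' FA) auto
  have dB: "(Vm - nw * (L * nw + L * W) - nw * E) * (r - s) \<le> w \<bullet> Ib"
    unfolding Ib_def using s_r by (intro set_int_inner_lower B_int' FB) auto
  have nIa: "norm Ia \<le> C0 * (r - s)"
    unfolding Ia_def using s_r by (intro set_int_norm_le A_int' A_norm) auto
  have nIb: "norm Ib \<le> C0 * (r - s)"
    unfolding Ib_def using s_r by (intro set_int_norm_le B_int' B_norm) auto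
  have nd: "norm (Ia - Ib) \<le> 2 * C0 * (r - s)"
    using norm_triangle_ineq4[of Ia Ib] nIa nIb by linarith
  define z where "z = w + (Ia - Ib)"
  have zeq: "x r - y r + int_vec (k1 - k2) = z"
    unfolding z_def w_def xr yr xr_eq yr_eq int_vec_diff by (simp add: algebra_simps)
  have tz: "tdist (x r) (y r) \<le> norm z" using tdist_le[of "x r" "y r" "k1 - k2"] zeq by simp
  have "(tdist (x r) (y r))\<^sup>2 \<le> (norm z)\<^sup>2" using tz tdist_nonneg by (intro power_mono) auto
  also have "(norm z)\<^sup>2 = nw\<^sup>2 + 2 * (w \<bullet> Ia - w \<bullet> Ib) + (norm (Ia - Ib))\<^sup>2"
    unfolding z_def power2_norm_eq_inner nw[symmetric]
    by (simp add: inner_add_left inner_add_right inner_diff_right inner_commute algebra_simps)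
  also have "\<dots> \<le> nw\<^sup>2 * (1 + 3 * L * (r - s)) + L * W\<^sup>2 * (r - s)
           + (2 * (2 * sqrt (real CARD('d)) * wmod (r - s) + 4 * sqrt (real CARD('d)) * L * C0 * (r - s))
              + 4 * C0\<^sup>2 * (r - s)) * (r - s)"
    by (rule final_arith[OF nw_nn L_nn C0_nn _ wmod_nonneg _ E_def VpVm dA dB nd norm_ge_zero])
       (use s_r tdist_le_sqrt in \<open>auto simp: nw_def\<close>)
  finally show ?thesis unfolding nw_def W_def varpi2_def varpi1_def by simp
qed

end
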